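(* Let $\mathcal{H}$ be a complex Hilbert space, $A\in\mathcal{B}(\mathcal{H})$ positive and $S\in\mathcal{B}_A(\mathcal{H})$. Then $$d\omega_A^2(S)\le \omega_A^2\left(S^{\sharp_A}S+S\right)+\omega_A\left(S^{\sharp_A}S^2\right)+\frac12\left\|\left(S^{\sharp_A}S\right)^2+S^{\sharp_A}S\right\|_A .$$
   Context: $\mathcal{B}(\mathcal{H})$ denotes the bounded linear operators on $\mathcal{H}$. For positive $A$, $\langle x,z\rangle_A=\langle Ax,z\rangle$ and $\|z\|_A=\|A^{1/2}z\|$. $\mathcal{B}_A(\mathcal{H})$ is the set of $S\in\mathcal{B}(\mathcal{H})$ for which some $R\in\mathcal{B}(\mathcal{H})$ satisfies $AR=S^*A$; for such $S$, $S^{\sharp_A}=A^{\dagger}S^*A$ with $A^\dagger$ the Moore–Penrose inverse of $A$. For operators $T$ bounded with respect to $\|\cdot\|_A$: $\|T\|_A=\sup_{\|z\|_A=1}\|Tz\|_A$, $\omega_A(T)=\sup_{\|z\|_A=1}|\langle Tz,z\rangle_A|$, and $d\omega_A(T)=\sup_{\|z\|_A=1}(|\langle Tz,z\rangle_A|^2+\|Tz\|_A^4)^{1/2}$. *)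

theory Defs
  imports Complex_Main
begin

class hs_complex_vector = ab_group_add +
  fixes hs_scale :: "complex \<Rightarrow> 'a \<Rightarrow> 'a"  (infixr "*\<^sub>C" 75)
  assumes hs_scale_add_right: "a *\<^sub>C (x + y) = a *\<^sub>C x + a *\<^sub>C y"
    and hs_scale_add_left: "(a + b) *\<^sub>C x = a *\<^sub>C x + b *\<^sub>C x"
    and hs_scale_scale: "a *\<^sub>C (b *\<^sub>C x) = (a * b) *\<^sub>C x"
    and hs_scale_one: "1 *\<^sub>C x = x"

class hs_complex_inner = hs_complex_vector +
  fixes hs_inner :: "'a \<Rightarrow> 'a \<Rightarrow> complex"
  assumes hs_inner_add_left: "hs_inner (x + y) z = hs_inner x z + hs_inner y z"
    and hs_inner_scale_left: "hs_inner (a *\<^sub>C x) y = a * hs_inner x y"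
    and hs_inner_commute: "hs_inner y x = cnj (hs_inner x y)"
    and hs_inner_nonneg: "0 \<le> Re (hs_inner x x)"
    and hs_inner_definite: "hs_inner x x = 0 \<longleftrightarrow> x = 0"

class hs_hilbert = hs_complex_inner +
  assumes hs_complete:
    "\<And>X :: nat \<Rightarrow> 'a.
       (\<forall>e>0. \<exists>N. \<forall>m\<ge>N. \<forall>n\<ge>N. sqrt (Re (hs_inner (X m - X n) (X m - X n))) < e) \<Longrightarrow>
       (\<exists>L. (\<lambda>n. sqrt (Re (hs_inner (X n - L) (X n - L)))) \<longlonglongrightarrow> 0)"

definition hs_norm :: "'a::hs_hilbert \<Rightarrow> real" where
  "hs_norm x = sqrt (Re (hs_inner x x))"

definition bounded_op :: "('a::hs_hilbert \<Rightarrow> 'a) \<Rightarrow> bool" where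
  "bounded_op T \<longleftrightarrow>
     (\<forall>x y. T (x + y) = T x + T y) \<and> (\<forall>a x. T (a *\<^sub>C x) = a *\<^sub>C T x) \<and>
     (\<exists>K. \<forall>x. hs_norm (T x) \<le> K * hs_norm x)"

definition hs_adj :: "('a::hs_hilbert \<Rightarrow> 'a) \<Rightarrow> ('a \<Rightarrow> 'a)" where
  "hs_adj T = (SOME T'. bounded_op T' \<and> (\<forall>x y. hs_inner (T x) y = hs_inner x (T' y)))"

definition positive_op :: "('a::hs_hilbert \<Rightarrow> 'a) \<Rightarrow> bool" where
  "positive_op A \<longleftrightarrow> bounded_op A \<and>
     (\<forall>x. Im (hs_inner (A x) x) = 0 \<and> 0 \<le> Re (hs_inner (A x) x))"

text \<open>Moore--Penrose inverse of A, on its domain R(A) + R(A)^perp: A-dagger y is the unique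
  x in N(A)^perp with A x = P_{closure R(A)} y, i.e. y - A x orthogonal to R(A).\<close>
definition mp_inv :: "('a::hs_hilbert \<Rightarrow> 'a) \<Rightarrow> 'a \<Rightarrow> 'a" where
  "mp_inv A y = (THE x. (\<forall>z. A z = 0 \<longrightarrow> hs_inner x z = 0) \<and>
                        (\<forall>w. hs_inner (y - A x) (A w) = 0))"

definition BA :: "('a::hs_hilbert \<Rightarrow> 'a) \<Rightarrow> ('a \<Rightarrow> 'a) set" where
  "BA A = {S. bounded_op S \<and> (\<exists>R. bounded_op R \<and> A \<circ> R = hs_adj S \<circ> A)}"

definition A_adj :: "('a::hs_hilbert \<Rightarrow> 'a) \<Rightarrow> ('a \<Rightarrow> 'a) \<Rightarrow> ('a \<Rightarrow> 'a)" where
  "A_adj A S = mp_inv A \<circ> hs_adj S \<circ> A"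

definition A_norm :: "('a::hs_hilbert \<Rightarrow> 'a) \<Rightarrow> 'a \<Rightarrow> real" where
  "A_norm A z = sqrt (Re (hs_inner (A z) z))"

text \<open>Suprema over the A-unit sphere; 0 is inserted so that the empty sphere (A = 0)
  gives 0 (all quantities are nonnegative, so nothing changes otherwise).\<close>
definition A_opnorm :: "('a::hs_hilbert \<Rightarrow> 'a) \<Rightarrow> ('a \<Rightarrow> 'a) \<Rightarrow> real" where
  "A_opnorm A T = Sup (insert 0 ((\<lambda>z. A_norm A (T z)) ` {z. A_norm A z = 1}))"

definition A_numrad :: "('a::hs_hilbert \<Rightarrow> 'a) \<Rightarrow> ('a \<Rightarrow> 'a) \<Rightarrow> real" where
  "A_numrad A T = Sup (insert 0 ((\<lambda>z. cmod (hs_inner (A (T z)) z)) ` {z. A_norm A z = 1}))"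

definition A_dwrad :: "('a::hs_hilbert \<Rightarrow> 'a) \<Rightarrow> ('a \<Rightarrow> 'a) \<Rightarrow> real" where
  "A_dwrad A T = Sup (insert 0 ((\<lambda>z. sqrt ((cmod (hs_inner (A (T z)) z))\<^sup>2 + (A_norm A (T z)) ^ 4))
                                 ` {z. A_norm A z = 1}))"

end

theory Submission imports Defs begin

lemma hs_scale_zero_left[simp]: "(0::complex) *\<^sub>C (x::'a::hs_complex_vector) = 0"
proof -
  have "((0::complex)+0) *\<^sub>C x = 0 *\<^sub>C x + 0 *\<^sub>C x" by (rule hs_scale_add_left)
  hence "0 *\<^sub>C x = 0 *\<^sub>C x + 0 *\<^sub>C x" by (simp only: add_0_left)
  thus ?thesis by (simp only: add_cancel_right_right)
qed

lemma hs_scale_zero_right[simp]: "a *\<^sub>C (0::'a::hs_complex_vector) = 0"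
proof -
  have "a *\<^sub>C (0 + 0) = a *\<^sub>C 0 + a *\<^sub>C (0::'a)" by (rule hs_scale_add_right)
  hence "a *\<^sub>C 0 = a *\<^sub>C 0 + a *\<^sub>C (0::'a)" by (simp only: add_0_left)
  thus ?thesis by (simp only: add_cancel_right_right)
qed

lemma hs_scale_minus_left: "(- a) *\<^sub>C (x::'a::hs_complex_vector) = - (a *\<^sub>C x)"
proof -
  have "a *\<^sub>C x + (- a) *\<^sub>C x = 0" by (simp add: hs_scale_add_left[symmetric])
  then show ?thesis by (rule add_eq_0_iff[THEN iffD1])
qed

lemma hs_scale_minus_right: "a *\<^sub>C (- x::'a::hs_complex_vector) = - (a *\<^sub>C x)"
proof -
  have "a *\<^sub>C x + a *\<^sub>C (- x) = 0" by (simp add: hs_scale_add_right[symmetric])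
  then show ?thesis by (rule add_eq_0_iff[THEN iffD1])
qed

lemma hs_scale_diff_right: "a *\<^sub>C (x - y::'a::hs_complex_vector) = a *\<^sub>C x - a *\<^sub>C y"
  unfolding diff_conv_add_uminus by (simp only: hs_scale_add_right hs_scale_minus_right)

lemma hs_scale_diff_left: "(a - b) *\<^sub>C (x::'a::hs_complex_vector) = a *\<^sub>C x - b *\<^sub>C x"
  unfolding diff_conv_add_uminus by (simp only: hs_scale_add_left hs_scale_minus_left)

locale sesq =
  fixes B :: "'a::hs_complex_vector \<Rightarrow> 'a \<Rightarrow> complex"
  assumes add_left: "B (x + y) z = B x z + B y z"
    and scale_left: "B (a *\<^sub>C x) y = a * B x y"
    and herm: "B y x = cnj (B x y)"
    and nonneg: "0 \<le> Re (B x x)"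
begin

definition nB :: "'a \<Rightarrow> real" where "nB x = sqrt (Re (B x x))"

lemma add_right: "B x (y + z) = B x y + B x z"
  using herm[of x "y+z"] herm[of x y] herm[of x z] add_left[of y z x] by simp

lemma scale_right: "B x (a *\<^sub>C y) = cnj a * B x y"
  using herm[of x "a *\<^sub>C y"] herm[of x y] scale_left[of a y x] by simp

lemma zero_left[simp]: "B 0 y = 0"
  using scale_left[of 0 x y] by simp

lemma zero_right[simp]: "B x 0 = 0"
  using herm[of 0 x] by simp

lemma minus_left: "B (- x) y = - B x y"
proof -
  have "B x y + B (- x) y = 0" by (simp add: add_left[symmetric])
  then show ?thesis by (rule add_eq_0_iff[THEN iffD1])
qed

lemma minus_right: "B x (- y) = - B x y"
proof -
  have "B x y + B x (- y) = 0" by (simp add: add_right[symmetric])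
  then show ?thesis by (rule add_eq_0_iff[THEN iffD1])
qed

lemma diff_left: "B (x - y) z = B x z - B y z"
  unfolding diff_conv_add_uminus by (simp only: add_left minus_left)

lemma diff_right: "B x (y - z) = B x y - B x z"
  unfolding diff_conv_add_uminus by (simp only: add_right minus_right)

lemma Im_self[simp]: "Im (B x x) = 0"
proof -
  have "Im (B x x) = - Im (B x x)" using arg_cong[OF herm[of x x], of Im] by simp
  then show ?thesis by simp
qed

lemma self_real: "B x x = complex_of_real (Re (B x x))"
  by (simp add: complex_eq_iff)

lemma nB_nonneg[simp]: "0 \<le> nB x" by (simp add: nB_def nonneg)

lemma nB_sq: "(nB x)\<^sup>2 = Re (B x x)"
  by (simp add: nB_def nonneg)

lemma expand: "Re (B (x + y) (x + y)) = Re (B x x) + 2 * Re (B x y) + Re (B y y)"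
proof -
  have "Re (B y x) = Re (B x y)" by (subst herm) simp
  then show ?thesis by (simp add: add_left add_right)
qed

lemma expand_diff: "Re (B (x - y) (x - y)) = Re (B x x) - 2 * Re (B x y) + Re (B y y)"
proof -
  have "Re (B y x) = Re (B x y)" by (subst herm) simp
  then show ?thesis by (simp add: diff_left diff_right)
qed

lemma quad: "Re (B (x - t *\<^sub>C y) (x - t *\<^sub>C y)) = Re (B x x) - 2 * Re (cnj t * B x y) + (cmod t)\<^sup>2 * Re (B y y)"
proof -
  have e: "B (x - t *\<^sub>C y) (x - t *\<^sub>C y) = B x x - cnj t * B x y - t * B y x + t * cnj t * B y y"
    by (simp add: diff_left diff_right scale_left scale_right algebra_simps)
  have h: "B y x = cnj (B x y)" by (rule herm)
  have r1: "Re (t * B y x) = Re (cnj t * B x y)" unfolding h by simp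
  have r2: "Re (t * cnj t * B y y) = (cmod t)\<^sup>2 * Re (B y y)"
  proof -
    have "t * cnj t = complex_of_real ((cmod t)\<^sup>2)" by (rule complex_norm_square[symmetric])
    then show ?thesis by simp
  qed
  show ?thesis unfolding e using r1 r2 by simp
qed

lemma quad_opt:
  assumes r: "Re (B y y) > 0"
  shows "Re (B (x - (B x y / complex_of_real (Re (B y y))) *\<^sub>C y) (x - (B x y / complex_of_real (Re (B y y))) *\<^sub>C y))
         = Re (B x x) - (cmod (B x y))\<^sup>2 / Re (B y y)"
proof -
  define t where "t = B x y / complex_of_real (Re (B y y))"
  have "Re (B (x - t *\<^sub>C y) (x - t *\<^sub>C y)) = Re (B x x) - 2 * Re (cnj t * B x y) + (cmod t)\<^sup>2 * Re (B y y)" by (rule quad)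
  also have "Re (cnj t * B x y) = (cmod (B x y))\<^sup>2 / Re (B y y)"
  proof -
    have "cnj (B x y) * B x y = complex_of_real ((cmod (B x y))\<^sup>2)"
      by (metis complex_norm_square mult.commute)
    then have "cnj t * B x y = complex_of_real ((cmod (B x y))\<^sup>2 / Re (B y y))"
      unfolding t_def by (simp add: field_simps)
    then show ?thesis by simp
  qed
  also have "(cmod t)\<^sup>2 * Re (B y y) = (cmod (B x y))\<^sup>2 / Re (B y y)"
    unfolding t_def using r by (simp add: norm_divide power2_eq_square field_simps)
  finally show ?thesis unfolding t_def by simp
qed

lemma cs_sq: "(cmod (B x y))\<^sup>2 \<le> Re (B x x) * Re (B y y)"
proof (cases "Re (B y y) = 0")
  case True
  show ?thesis
  proof (rule ccontr)
    assume "\<not> ?thesis"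
    then have c: "cmod (B x y) \<noteq> 0" using True by simp
    define s where "s = (Re (B x x) + 1) / (2 * (cmod (B x y))\<^sup>2)"
    have "0 \<le> Re (B (x - (complex_of_real s * B x y) *\<^sub>C y) (x - (complex_of_real s * B x y) *\<^sub>C y))"
      by (rule nonneg)
    also have "\<dots> = Re (B x x) - 2 * Re (cnj (complex_of_real s * B x y) * B x y)"
      unfolding quad using True by simp
    also have "Re (cnj (complex_of_real s * B x y) * B x y) = s * (cmod (B x y))\<^sup>2"
    proof -
      have "cnj (B x y) * B x y = complex_of_real ((cmod (B x y))\<^sup>2)"
        by (metis complex_norm_square mult.commute)
      then show ?thesis by (simp add: mult.assoc)
    qed
    also have "2 * (s * (cmod (B x y))\<^sup>2) = Re (B x x) + 1"
      unfolding s_def using c by (simp add: field_simps)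
    finally show False by simp
  qed
next
  case False
  then have r: "Re (B y y) > 0" using nonneg[of y] by simp
  define t where "t = B x y / complex_of_real (Re (B y y))"
  have "0 \<le> Re (B (x - t *\<^sub>C y) (x - t *\<^sub>C y))" by (rule nonneg)
  also have "\<dots> = Re (B x x) - 2 * Re (cnj t * B x y) + (cmod t)\<^sup>2 * Re (B y y)" by (rule quad)
  also have "Re (cnj t * B x y) = (cmod (B x y))\<^sup>2 / Re (B y y)"
  proof -
    have "cnj (B x y) * B x y = complex_of_real ((cmod (B x y))\<^sup>2)"
      by (metis complex_norm_square mult.commute)
    then have "cnj t * B x y = complex_of_real ((cmod (B x y))\<^sup>2 / Re (B y y))"
      unfolding t_def by (simp add: field_simps)
    then show ?thesis by simp
  qed
  also have "(cmod t)\<^sup>2 * Re (B y y) = (cmod (B x y))\<^sup>2 / Re (B y y)"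
    unfolding t_def using r by (simp add: norm_divide power2_eq_square field_simps)
  finally have "0 \<le> Re (B x x) - (cmod (B x y))\<^sup>2 / Re (B y y)" by simp
  then show ?thesis using r by (simp add: field_simps)
qed

lemma cs: "cmod (B x y) \<le> nB x * nB y"
proof -
  have "(cmod (B x y))\<^sup>2 \<le> (nB x * nB y)\<^sup>2"
    using cs_sq by (simp add: power_mult_distrib nB_sq)
  then show ?thesis by (rule power2_le_imp_le) simp
qed

lemma Re_le: "Re (B x y) \<le> nB x * nB y"
  using cs[of x y] complex_Re_le_cmod[of "B x y"] by linarith

lemma nB_triangle: "nB (x + y) \<le> nB x + nB y"
proof -
  have "(nB (x + y))\<^sup>2 \<le> (nB x + nB y)\<^sup>2"
    unfolding nB_sq expand power2_sum using Re_le[of x y] by (simp add: nB_sq)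
  then show ?thesis by (rule power2_le_imp_le) simp
qed

lemma nB_scale: "nB (a *\<^sub>C x) = cmod a * nB x"
proof -
  have "Re (B (a *\<^sub>C x) (a *\<^sub>C x)) = (cmod a)\<^sup>2 * Re (B x x)"
  proof -
    have "a * cnj a = complex_of_real ((cmod a)\<^sup>2)" by (rule complex_norm_square[symmetric])
    then have "B (a *\<^sub>C x) (a *\<^sub>C x) = complex_of_real ((cmod a)\<^sup>2) * B x x"
      by (simp add: scale_left scale_right mult.assoc[symmetric] mult.commute[of "cnj a"])
    then show ?thesis by simp
  qed
  then show ?thesis unfolding nB_def by (simp add: real_sqrt_mult)
qed

lemma nB_minus: "nB (- x) = nB x"
  unfolding nB_def by (simp add: minus_left minus_right)

lemma nB_diff_triangle: "nB (x - y) \<le> nB (x - z) + nB (z - y)"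
  using nB_triangle[of "x - z" "z - y"] by simp

lemma buzano:
  assumes "nB e = 1"
  shows "cmod (B x e * B e y) \<le> (nB x * nB y + cmod (B x y)) / 2"
proof -
  define w where "w = (2 * B y e) *\<^sub>C e - y"
  have bee: "B e e = 1" using assms self_real[of e] nB_sq[of e] by simp
  have "B w w = 4 * (B y e * cnj (B y e)) - 2 * B y e * B e y - 2 * cnj (B y e) * B y e + B y y"
    unfolding w_def by (simp add: diff_left diff_right scale_left scale_right bee algebra_simps)
  also have "B e y = cnj (B y e)" by (rule herm)
  finally have "B w w = B y y" by (simp add: algebra_simps)
  then have nw: "nB w = nB y" unfolding nB_def by simp
  have "B x w = 2 * B x e * B e y - B x y"
    unfolding w_def by (simp add: diff_right scale_right herm[of e y])
  then have "cmod (2 * B x e * B e y - B x y) \<le> nB x * nB y" using cs[of x w] nw by simp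
  then have "cmod (2 * (B x e * B e y)) \<le> nB x * nB y + cmod (B x y)"
    using norm_triangle_ineq4[of "2 * B x e * B e y" "B x y"] norm_triangle_ineq2[of "2 * B x e * B e y" "B x y"]
    by (simp add: mult.assoc)
  then show ?thesis by (simp add: norm_mult)
qed

end

interpretation hs: sesq "hs_inner :: 'a::hs_complex_inner \<Rightarrow> 'a \<Rightarrow> complex"
  by unfold_locales (auto simp: hs_inner_add_left hs_inner_scale_left hs_inner_nonneg intro: hs_inner_commute)

lemma hs_norm_eq: "hs_norm (x::'a::hs_hilbert) = hs.nB x"
  by (simp add: hs_norm_def hs.nB_def)

lemma hs_zero_iff: "Re (hs_inner x x) = 0 \<longleftrightarrow> (x::'a::hs_complex_inner) = 0"
proof
  assume "Re (hs_inner x x) = 0"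
  then have "hs_inner x x = 0" using hs.self_real[of x] by simp
  then show "x = 0" using hs_inner_definite by blast
qed simp

lemma half_double: "(1/2::complex) *\<^sub>C (x + x) = (x::'a::hs_complex_vector)"
proof -
  have "x + x = (1 + 1) *\<^sub>C x" by (simp only: hs_scale_add_left hs_scale_one)
  then have "(1/2::complex) *\<^sub>C (x + x) = ((1/2) * (1 + 1)) *\<^sub>C x" by (simp only: hs_scale_scale)
  then show ?thesis by (simp add: hs_scale_one)
qed

lemma projection:
  fixes M :: "'a::hs_hilbert set"
  assumes M0: "0 \<in> M" and Madd: "\<And>x y. x \<in> M \<Longrightarrow> y \<in> M \<Longrightarrow> x + y \<in> M"
    and Mscale: "\<And>x a. x \<in> M \<Longrightarrow> a *\<^sub>C x \<in> M"
    and Mclosed: "\<And>X L. (\<forall>n. X n \<in> M) \<Longrightarrow> (\<lambda>n. hs_norm (X n - L)) \<longlonglongrightarrow> 0 \<Longrightarrow> L \<in> M"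
  shows "\<exists>m\<in>M. \<forall>v\<in>M. hs_inner (w - m) v = 0"
proof -
  let ?N = "hs.nB :: 'a \<Rightarrow> real"
  define D where "D = Inf ((\<lambda>v. (?N (w - v))\<^sup>2) ` M)"
  have bdd: "bdd_below ((\<lambda>v. (?N (w - v))\<^sup>2) ` M)"
    by (rule bdd_belowI[of _ 0]) auto
  have Dle: "D \<le> (?N (w - v))\<^sup>2" if "v \<in> M" for v
    unfolding D_def using bdd that by (auto intro: cInf_lower)
  have D0: "0 \<le> D" unfolding D_def using M0 by (intro cInf_greatest) auto
  have "\<exists>v\<in>M. (?N (w - v))\<^sup>2 < D + inverse (real (Suc n))" for n
  proof -
    have "Inf ((\<lambda>v. (?N (w - v))\<^sup>2) ` M) < D + inverse (real (Suc n))" unfolding D_def by simp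
    from cInf_lessD[OF _ this] M0 show ?thesis by auto
  qed
  then obtain v where vM: "\<And>n. v n \<in> M" and vD: "\<And>n. (?N (w - v n))\<^sup>2 < D + inverse (real (Suc n))"
    by metis
  have Mminus: "- x \<in> M" if "x \<in> M" for x
    using Mscale[OF that, of "-1"] by (simp add: hs_scale_minus_left hs_scale_one)
  have par: "(?N (v m - v n))\<^sup>2 \<le> 2 * inverse (real (Suc n)) + 2 * inverse (real (Suc m))" for m n
  proof -
    define a where "a = w - v n"
    define b where "b = w - v m"
    define mid where "mid = (1/2::complex) *\<^sub>C (v n + v m)"
    have midM: "mid \<in> M" unfolding mid_def using vM Madd Mscale by blast
    have "a + b = (w + w) - (v n + v m)" unfolding a_def b_def by (simp add: algebra_simps)
    then have "(1/2::complex) *\<^sub>C (a + b) = w - mid"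
      unfolding mid_def by (simp add: hs_scale_diff_right half_double)
    then have "?N (w - mid) = (1/2) * ?N (a + b)" using hs.nB_scale[of "1/2::complex" "a + b"] by simp
    then have "?N (a + b) = 2 * ?N (w - mid)" by simp
    then have "(?N (a + b))\<^sup>2 = 4 * (?N (w - mid))\<^sup>2" by (simp add: power_mult_distrib)
    then have ab: "4 * D \<le> (?N (a + b))\<^sup>2" using Dle[OF midM] by simp
    have "a - b = v m - v n" unfolding a_def b_def by simp
    have "(?N (a + b))\<^sup>2 + (?N (a - b))\<^sup>2 = 2 * (?N a)\<^sup>2 + 2 * (?N b)\<^sup>2"
      unfolding hs.nB_sq hs.expand hs.expand_diff by simp
    then have pe: "(?N (a + b))\<^sup>2 + (?N (v m - v n))\<^sup>2 = 2 * (?N a)\<^sup>2 + 2 * (?N b)\<^sup>2"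
      using \<open>a - b = v m - v n\<close> by simp
    have "(?N a)\<^sup>2 < D + inverse (real (Suc n))" "(?N b)\<^sup>2 < D + inverse (real (Suc m))"
      unfolding a_def b_def by (rule vD)+
    then show ?thesis using ab pe by linarith
  qed
  have cauchy: "\<forall>e>0. \<exists>N. \<forall>m\<ge>N. \<forall>n\<ge>N. sqrt (Re (hs_inner (v m - v n) (v m - v n))) < e"
  proof (intro allI impI)
    fix e :: real assume e: "e > 0"
    obtain N0 :: nat where N0: "4 / e\<^sup>2 < real N0" using reals_Archimedean2 by blast
    have "\<forall>m\<ge>N0. \<forall>n\<ge>N0. ?N (v m - v n) < e"
    proof (intro allI impI)
      fix m n assume mn: "N0 \<le> m" "N0 \<le> n"
      have i1: "inverse (real (Suc n)) \<le> inverse (real (Suc N0))" using mn by (simp add: field_simps)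
      have i2: "inverse (real (Suc m)) \<le> inverse (real (Suc N0))" using mn by (simp add: field_simps)
      have "4 / e\<^sup>2 < real (Suc N0)" using N0 by simp
      then have "4 * inverse (real (Suc N0)) < e\<^sup>2" using e by (simp add: field_simps)
      then have "(?N (v m - v n))\<^sup>2 < e\<^sup>2" using par[of m n] i1 i2 by linarith
      then show "?N (v m - v n) < e" using e by (simp add: power_less_imp_less_base)
    qed
    then show "\<exists>N. \<forall>m\<ge>N. \<forall>n\<ge>N. sqrt (Re (hs_inner (v m - v n) (v m - v n))) < e"
      unfolding hs.nB_def by blast
  qed
  from hs_complete[OF cauchy] obtain L where L: "(\<lambda>n. sqrt (Re (hs_inner (v n - L) (v n - L)))) \<longlonglongrightarrow> 0"
    by blast
  then have L': "(\<lambda>n. hs_norm (v n - L)) \<longlonglongrightarrow> 0" by (simp add: hs_norm_def)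
  have LM: "L \<in> M" by (rule Mclosed[OF _ L']) (simp add: vM)
  have lim: "(\<lambda>n. sqrt (D + inverse (real (Suc n))) + ?N (v n - L)) \<longlonglongrightarrow> sqrt (D + 0) + 0"
    by (intro tendsto_intros LIMSEQ_inverse_real_of_nat) (use L in \<open>simp add: hs.nB_def\<close>)
  have "?N (w - L) \<le> sqrt (D + 0) + 0"
  proof (rule LIMSEQ_le_const[OF lim], intro exI allI impI)
    fix n
    have "?N (w - L) \<le> ?N (w - v n) + ?N (v n - L)" by (rule hs.nB_diff_triangle)
    also have "?N (w - v n) \<le> sqrt (D + inverse (real (Suc n)))"
      using vD[of n] by (metis hs.nB_nonneg less_imp_le real_sqrt_abs real_sqrt_le_iff abs_of_nonneg)
    finally show "?N (w - L) \<le> sqrt (D + inverse (real (Suc n))) + ?N (v n - L)" by simp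
  qed
  then have wL: "(?N (w - L))\<^sup>2 \<le> D" using D0 by (metis add_0_right hs.nB_nonneg power_mono real_sqrt_pow2)
  have "\<forall>u\<in>M. hs_inner (w - L) u = 0"
  proof
    fix u assume uM: "u \<in> M"
    show "hs_inner (w - L) u = 0"
    proof (cases "Re (hs_inner u u) > 0")
      case True
      define t where "t = hs_inner (w - L) u / complex_of_real (Re (hs_inner u u))"
      have "L + t *\<^sub>C u \<in> M" using LM uM Madd Mscale by blast
      then have "D \<le> (?N (w - (L + t *\<^sub>C u)))\<^sup>2" by (rule Dle)
      also have "w - (L + t *\<^sub>C u) = (w - L) - t *\<^sub>C u" by simp
      also have "(?N ((w - L) - t *\<^sub>C u))\<^sup>2 = (?N (w - L))\<^sup>2 - (cmod (hs_inner (w - L) u))\<^sup>2 / Re (hs_inner u u)"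
        unfolding hs.nB_sq t_def by (rule hs.quad_opt[OF True])
      finally have "(cmod (hs_inner (w - L) u))\<^sup>2 / Re (hs_inner u u) \<le> 0" using wL by linarith
      then have "(cmod (hs_inner (w - L) u))\<^sup>2 \<le> 0" using True by (simp add: divide_le_0_iff)
      then show ?thesis by simp
    next
      case False
      then have "u = 0" using hs_zero_iff[of u] hs.nonneg[of u] by linarith
      then show ?thesis by simp
    qed
  qed
  then show ?thesis using LM by blast
qed


lemma hs_norm_nonneg[simp]: "0 \<le> hs_norm x" by (simp add: hs_norm_def hs_inner_nonneg)

lemma bounded_opK:
  assumes "bounded_op T"
  obtains K where "K \<ge> 0" "\<And>x. hs_norm (T x) \<le> K * hs_norm x"
proof -
  from assms obtain K where K: "\<And>x. hs_norm (T x) \<le> K * hs_norm x" unfolding bounded_op_def by blast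
  have "hs_norm (T x) \<le> max K 0 * hs_norm x" for x
    using K[of x] mult_right_mono[of K "max K 0" "hs_norm x"] by simp
  then show ?thesis using that[of "max K 0"] by simp
qed

lemma bop_add: "bounded_op T \<Longrightarrow> T (x + y) = T x + T y" by (simp add: bounded_op_def)
lemma bop_scale: "bounded_op T \<Longrightarrow> T (a *\<^sub>C x) = a *\<^sub>C T x" by (simp add: bounded_op_def)
lemma bop_zero: "bounded_op T \<Longrightarrow> T 0 = 0"
  using bop_scale[of T 0 0] by simp
lemma bop_minus: "bounded_op T \<Longrightarrow> T (- x) = - T x"
  using bop_scale[of T "-1" x] by (simp add: hs_scale_minus_left hs_scale_one)
lemma bop_diff: assumes T: "bounded_op T" shows "T (x - y) = T x - T y"
  unfolding diff_conv_add_uminus by (simp only: bop_add[OF T] bop_minus[OF T])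

lemma hs_norm_commute: "hs_norm (x - y) = hs_norm (y - x)"
  using hs.nB_minus[of "x - y"] by (simp add: hs_norm_eq)

lemma ker_closed:
  fixes f :: "'a::hs_hilbert \<Rightarrow> 'b::real_normed_vector"
  assumes add: "\<And>x y. f (x + y) = f x + f y" and K: "\<And>x. norm (f x) \<le> K * hs_norm x"
    and X: "\<forall>n. f (X n) = 0" and L: "(\<lambda>n. hs_norm (X n - L)) \<longlonglongrightarrow> 0"
  shows "f L = 0"
proof -
  have lim: "(\<lambda>n. K * hs_norm (X n - L)) \<longlonglongrightarrow> K * 0" by (intro tendsto_intros L)
  have "norm (f L) \<le> K * 0"
  proof (rule LIMSEQ_le_const[OF lim], intro exI allI impI)
    fix n
    have "f L = f (L - X n) + f (X n)" using add[of "L - X n" "X n"] by simp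
    then have "f L = f (L - X n)" using X by simp
    then show "norm (f L) \<le> K * hs_norm (X n - L)" using K[of "L - X n"] hs_norm_commute[of L "X n"] by simp
  qed
  then show ?thesis by simp
qed

lemma inner_ext: "(\<And>x. hs_inner x u = hs_inner x v) \<Longrightarrow> u = (v::'a::hs_complex_inner)"
proof -
  assume h: "\<And>x. hs_inner x u = hs_inner x v"
  have "hs_inner (u - v) (u - v) = hs_inner (u - v) u - hs_inner (u - v) v" by (rule hs.diff_right)
  then have "hs_inner (u - v) (u - v) = 0" using h by simp
  then have "u - v = 0" using hs_inner_definite by blast
  then show ?thesis by simp
qed

lemma riesz:
  fixes f :: "'a::hs_hilbert \<Rightarrow> complex"
  assumes add: "\<And>x y. f (x + y) = f x + f y" and sc: "\<And>a x. f (a *\<^sub>C x) = a * f x"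
    and K: "\<And>x. cmod (f x) \<le> K * hs_norm x"
  shows "\<exists>y. \<forall>x. f x = hs_inner x y"
proof (cases "\<forall>x. f x = 0")
  case True
  then show ?thesis by (intro exI[of _ 0]) simp
next
  case False
  then obtain w where fw: "f w \<noteq> 0" by blast
  have f0: "f 0 = 0" using sc[of 0 0] by simp
  have fminus: "f (- x) = - f x" for x using sc[of "-1" x] by (simp add: hs_scale_minus_left hs_scale_one)
  have fdiff: "f (x - y) = f x - f y" for x y unfolding diff_conv_add_uminus by (simp only: add fminus)
  define M where "M = {x. f x = 0}"
  have "\<exists>m\<in>M. \<forall>v\<in>M. hs_inner (w - m) v = 0"
  proof (rule projection)
    show "0 \<in> M" using f0 by (simp add: M_def)
    show "x + y \<in> M" if "x \<in> M" "y \<in> M" for x y using that by (simp add: M_def add)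
    show "a *\<^sub>C x \<in> M" if "x \<in> M" for x a using that by (simp add: M_def sc)
    show "L \<in> M" if "\<forall>n. X n \<in> M" "(\<lambda>n. hs_norm (X n - L)) \<longlonglongrightarrow> 0" for X L
      using ker_closed[of f K X L] that add K by (simp add: M_def)
  qed
  then obtain m where mM: "m \<in> M" and orth: "\<And>v. v \<in> M \<Longrightarrow> hs_inner (w - m) v = 0" by blast
  define e where "e = w - m"
  have fe: "f e = f w" using mM by (simp add: e_def M_def fdiff)
  have e0: "e \<noteq> 0" using fe fw f0 by auto
  have ee: "hs_inner e e \<noteq> 0" using e0 hs_inner_definite by blast
  have "f x = hs_inner x ((cnj (f e / hs_inner e e)) *\<^sub>C e)" for x
  proof -
    define v where "v = x - (f x / f e) *\<^sub>C e"
    have "f v = 0" unfolding v_def using fe fw by (simp add: fdiff sc)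
    then have "hs_inner e v = 0" using orth[of v] by (simp add: M_def e_def)
    then have "hs_inner v e = 0" using hs.herm[of e v] by simp
    then have "hs_inner x e = (f x / f e) * hs_inner e e" unfolding v_def by (simp add: hs.diff_left hs.scale_left)
    then show ?thesis using ee fw fe by (simp add: hs.scale_right field_simps)
  qed
  then show ?thesis by blast
qed

lemma adj_exists:
  fixes T :: "'a::hs_hilbert \<Rightarrow> 'a"
  assumes T: "bounded_op T"
  shows "\<exists>T'. bounded_op T' \<and> (\<forall>x y. hs_inner (T x) y = hs_inner x (T' y))"
proof -
  obtain K where K0: "K \<ge> 0" and K: "\<And>x. hs_norm (T x) \<le> K * hs_norm x" using bounded_opK[OF T] by blast
  have "\<exists>v. \<forall>x. hs_inner (T x) y = hs_inner x v" for y
  proof (rule riesz)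
    show "hs_inner (T (x + z)) y = hs_inner (T x) y + hs_inner (T z) y" for x z
      by (simp add: bop_add[OF T] hs_inner_add_left)
    show "hs_inner (T (a *\<^sub>C x)) y = a * hs_inner (T x) y" for a x
      by (simp add: bop_scale[OF T] hs_inner_scale_left)
    show "cmod (hs_inner (T x) y) \<le> (K * hs_norm y) * hs_norm x" for x
    proof -
      have "cmod (hs_inner (T x) y) \<le> hs_norm (T x) * hs_norm y" using hs.cs by (simp add: hs_norm_eq)
      also have "\<dots> \<le> K * hs_norm x * hs_norm y" using K[of x] by (simp add: mult_right_mono)
      finally show ?thesis by (simp add: algebra_simps)
    qed
  qed
  then obtain T' where T': "\<And>x y. hs_inner (T x) y = hs_inner x (T' y)" by metis
  have "bounded_op T'"
    unfolding bounded_op_def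
  proof (intro conjI allI)
    show "T' (x + y) = T' x + T' y" for x y
      by (rule inner_ext) (simp add: T'[symmetric] hs.add_right)
    show "T' (a *\<^sub>C x) = a *\<^sub>C T' x" for a x
      by (rule inner_ext) (simp add: T'[symmetric] hs.scale_right)
    have "hs_norm (T' y) \<le> K * hs_norm y" for y
    proof -
      have "(hs_norm (T' y))\<^sup>2 = Re (hs_inner (T (T' y)) y)"
        by (simp add: T' hs_norm_eq hs.nB_sq)
      also have "\<dots> \<le> hs_norm (T (T' y)) * hs_norm y" using hs.Re_le by (simp add: hs_norm_eq)
      also have "\<dots> \<le> K * hs_norm (T' y) * hs_norm y" using K by (simp add: mult_right_mono)
      finally have h: "(hs_norm (T' y))\<^sup>2 \<le> K * hs_norm (T' y) * hs_norm y" .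
      show ?thesis
      proof (cases "hs_norm (T' y) = 0")
        case True then show ?thesis using K0 by simp
      next
        case False
        then have "hs_norm (T' y) > 0" using hs_norm_nonneg[of "T' y"] by linarith
        then show ?thesis using h by (simp add: power2_eq_square mult.assoc)
      qed
    qed
    then show "\<exists>K. \<forall>x. hs_norm (T' x) \<le> K * hs_norm x" by blast
  qed
  then show ?thesis using T' by blast
qed

lemma hs_adj_prop:
  assumes "bounded_op T"
  shows "bounded_op (hs_adj T)" and "hs_inner (T x) y = hs_inner x (hs_adj T y)"
proof -
  have "bounded_op (hs_adj T) \<and> (\<forall>x y. hs_inner (T x) y = hs_inner x (hs_adj T y))"
    unfolding hs_adj_def by (rule someI_ex[OF adj_exists[OF assms]])
  then show "bounded_op (hs_adj T)" and "hs_inner (T x) y = hs_inner x (hs_adj T y)" by auto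
qed


lemma ker_closed_hs:
  fixes f :: "'a::hs_hilbert \<Rightarrow> 'b::hs_hilbert"
  assumes add: "\<And>x y. f (x + y) = f x + f y" and K: "\<And>x. hs_norm (f x) \<le> K * hs_norm x"
    and X: "\<forall>n. f (X n) = 0" and L: "(\<lambda>n. hs_norm (X n - L)) \<longlonglongrightarrow> 0"
  shows "f L = 0"
proof -
  have lim: "(\<lambda>n. K * hs_norm (X n - L)) \<longlonglongrightarrow> K * 0" by (intro tendsto_intros L)
  have "hs_norm (f L) \<le> K * 0"
  proof (rule LIMSEQ_le_const[OF lim], intro exI allI impI)
    fix n
    have "f L = f (L - X n) + f (X n)" using add[of "L - X n" "X n"] by simp
    then have "f L = f (L - X n)" using X by simp
    then show "hs_norm (f L) \<le> K * hs_norm (X n - L)" using K[of "L - X n"] hs_norm_commute[of L "X n"] by simp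
  qed
  then have "Re (hs_inner (f L) (f L)) = 0"
    using hs_norm_nonneg[of "f L"] hs_inner_nonneg[of "f L"] unfolding hs_norm_def by simp
  then show ?thesis using hs_zero_iff by blast
qed

locale posA =
  fixes A :: "'a::hs_hilbert \<Rightarrow> 'a"
  assumes pos: "positive_op A"
begin

lemma bA: "bounded_op A" using pos by (simp add: positive_op_def)

lemma A_herm: "hs_inner (A x) y = hs_inner x (A y)"
proof -
  let ?q = "\<lambda>u v. hs_inner (A u) v"
  have im: "Im (?q u u) = 0" for u using pos by (simp add: positive_op_def)
  have e1: "?q (x + y) (x + y) = ?q x x + ?q x y + ?q y x + ?q y y"
    by (simp add: bop_add[OF bA] hs_inner_add_left hs.add_right)
  have e2: "?q (x + \<i> *\<^sub>C y) (x + \<i> *\<^sub>C y) = ?q x x - \<i> * ?q x y + \<i> * ?q y x + ?q y y"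
    by (simp add: bop_add[OF bA] bop_scale[OF bA] hs_inner_add_left hs.add_right hs_inner_scale_left hs.scale_right
        algebra_simps)
  have a1: "Im (?q x y) + Im (?q y x) = 0" using e1 im[of "x+y"] im[of x] im[of y] by simp
  have a2: "Re (?q y x) - Re (?q x y) = 0" using e2 im[of "x + \<i> *\<^sub>C y"] im[of x] im[of y] by simp
  have "?q y x = cnj (?q x y)" using a1 a2 by (simp add: complex_eq_iff)
  moreover have "hs_inner x (A y) = cnj (?q y x)" by (rule hs_inner_commute)
  ultimately show ?thesis by simp
qed

sublocale Ab: sesq "\<lambda>x y. hs_inner (A x) y"
proof
  show "hs_inner (A (x + y)) z = hs_inner (A x) z + hs_inner (A y) z" for x y z
    by (simp add: bop_add[OF bA] hs_inner_add_left)
  show "hs_inner (A (a *\<^sub>C x)) y = a * hs_inner (A x) y" for a x y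
    by (simp add: bop_scale[OF bA] hs_inner_scale_left)
  show "hs_inner (A y) x = cnj (hs_inner (A x) y)" for x y
  proof -
    have h: "cnj (hs_inner y (A x)) = hs_inner x (A y)"
      using A_herm[of x y] hs_inner_commute[of "A x" y] by simp
    have "hs_inner y (A x) = cnj (hs_inner x (A y))" using arg_cong[OF h, of cnj] by simp
    then show ?thesis using A_herm[of y x] A_herm[of x y] by simp
  qed
  show "0 \<le> Re (hs_inner (A x) x)" for x using pos by (simp add: positive_op_def)
qed

lemma nA_eq: "A_norm A x = Ab.nB x" by (simp add: A_norm_def Ab.nB_def)

lemma mp_inv_ok: "A (mp_inv A (A w)) = A w"
proof -
  define N where "N = {z. A z = 0}"
  obtain K where K: "\<And>x. hs_norm (A x) \<le> K * hs_norm x" using bA unfolding bounded_op_def by blast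
  have "\<exists>m\<in>N. \<forall>v\<in>N. hs_inner (w - m) v = 0"
  proof (rule projection)
    show "0 \<in> N" using bop_zero[OF bA] by (simp add: N_def)
    show "x + y \<in> N" if "x \<in> N" "y \<in> N" for x y using that by (simp add: N_def bop_add[OF bA])
    show "a *\<^sub>C x \<in> N" if "x \<in> N" for x a using that by (simp add: N_def bop_scale[OF bA])
    show "L \<in> N" if "\<forall>n. X n \<in> N" "(\<lambda>n. hs_norm (X n - L)) \<longlonglongrightarrow> 0" for X L
      using ker_closed_hs[of A K X L] that K bop_add[OF bA] by (simp add: N_def)
  qed
  then obtain m where mN: "A m = 0" and orth: "\<And>v. A v = 0 \<Longrightarrow> hs_inner (w - m) v = 0"
    by (auto simp: N_def)
  define x0 where "x0 = w - m"
  have Ax0: "A x0 = A w" using mN by (simp add: x0_def bop_diff[OF bA])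
  let ?P = "\<lambda>x. (\<forall>z. A z = 0 \<longrightarrow> hs_inner x z = 0) \<and> (\<forall>w'. hs_inner (A w - A x) (A w') = 0)"
  have Px0: "?P x0" using orth Ax0 by (simp add: x0_def)
  have uniq: "x = x0" if Px: "?P x" for x
  proof -
    have "hs_inner (A w - A x) (A (w - x)) = 0" using Px by blast
    then have "hs_inner (A (w - x)) (A (w - x)) = 0" by (simp add: bop_diff[OF bA])
    then have "A (w - x) = 0" using hs_inner_definite by blast
    then have Ax: "A x = A w" by (simp add: bop_diff[OF bA])
    have "A (x - x0) = 0" using Ax Ax0 by (simp add: bop_diff[OF bA])
    then have "hs_inner x (x - x0) = 0" "hs_inner x0 (x - x0) = 0" using Px Px0 by blast+
    then have "hs_inner (x - x0) (x - x0) = 0" by (simp add: hs.diff_left)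
    then have "x - x0 = 0" using hs_inner_definite by blast
    then show ?thesis by simp
  qed
  have "mp_inv A (A w) = x0" unfolding mp_inv_def by (rule the_equality[of ?P, OF Px0 uniq])
  then show ?thesis using Ax0 by simp
qed

end


lemma bop_comp: assumes "bounded_op T" "bounded_op U" shows "bounded_op (T \<circ> U)"
proof -
  obtain K1 where K1: "K1 \<ge> 0" "\<And>x. hs_norm (T x) \<le> K1 * hs_norm x" using bounded_opK[OF assms(1)] by blast
  obtain K2 where K2: "\<And>x. hs_norm (U x) \<le> K2 * hs_norm x" using bounded_opK[OF assms(2)] by blast
  have "hs_norm (T (U x)) \<le> (K1 * K2) * hs_norm x" for x
    using K1(2)[of "U x"] mult_left_mono[OF K2[of x] K1(1)] by (simp add: mult.assoc)
  then show ?thesis using assms unfolding bounded_op_def by auto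
qed

lemma funpow_bound:
  fixes T :: "'a::hs_hilbert \<Rightarrow> 'a"
  assumes "K \<ge> 0" "\<And>x. hs_norm (T x) \<le> K * hs_norm x"
  shows "hs_norm ((T ^^ n) x) \<le> K ^ n * hs_norm x"
proof (induction n)
  case 0 then show ?case by (simp add: funpow_0)
next
  case (Suc n)
  have "hs_norm ((T ^^ Suc n) x) \<le> K * hs_norm ((T ^^ n) x)" using assms(2) by simp
  also have "\<dots> \<le> K * (K ^ n * hs_norm x)" using Suc assms(1) by (simp add: mult_left_mono)
  finally show ?case by (simp add: mult.assoc)
qed

context posA
begin

abbreviation nA where "nA \<equiv> Ab.nB"

lemma nA_le_norm: "\<exists>C\<ge>0. \<forall>y. nA y \<le> C * hs_norm y"
proof -
  obtain K where K0: "K \<ge> 0" and K: "\<And>x. hs_norm (A x) \<le> K * hs_norm x" using bounded_opK[OF bA] by blast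
  have hK: "nA y \<le> sqrt K * hs_norm y" for y
  proof -
    have "(nA y)\<^sup>2 = Re (hs_inner (A y) y)" by (rule Ab.nB_sq)
    also have "\<dots> \<le> hs_norm (A y) * hs_norm y" using hs.Re_le by (simp add: hs_norm_eq)
    also have "\<dots> \<le> K * hs_norm y * hs_norm y" using K by (simp add: mult_right_mono)
    also have "\<dots> = (sqrt K * hs_norm y)\<^sup>2" using K0 by (simp add: power_mult_distrib power2_eq_square)
    finally show ?thesis by (rule power2_le_imp_le) (simp add: K0)
  qed
  show ?thesis using K0 hK by (intro exI[of _ "sqrt K"]) auto
qed

lemma iter_ineq:
  assumes "\<And>x y. hs_inner (A (W x)) y = hs_inner (A x) (W y)"
  shows "(nA (W x)) ^ (2 ^ n) \<le> nA ((W ^^ (2 ^ n)) x) * (nA x) ^ (2 ^ n - 1)"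
  using assms
proof (induction n arbitrary: W x)
  case 0 then show ?case by simp
next
  case (Suc n)
  have W2: "(W ^^ 2) z = W (W z)" for z by (simp add: numeral_2_eq_2)
  have sa2: "hs_inner (A ((W ^^ 2) u)) v = hs_inner (A u) ((W ^^ 2) v)" for u v
    unfolding W2 using Suc.prems by simp
  have IH: "(nA ((W ^^ 2) x)) ^ (2 ^ n) \<le> nA (((W ^^ 2) ^^ (2 ^ n)) x) * (nA x) ^ (2 ^ n - 1)"
    using Suc.IH[of "W ^^ 2", OF sa2] .
  have fp: "(W ^^ 2) ^^ (2 ^ n) = W ^^ (2 ^ Suc n)" by (simp add: funpow_mult)
  have sq: "(nA (W x))\<^sup>2 \<le> nA ((W ^^ 2) x) * nA x"
  proof -
    have "(nA (W x))\<^sup>2 = Re (hs_inner (A (W x)) (W x))" by (rule Ab.nB_sq)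
    also have "\<dots> = Re (hs_inner (A (W (W x))) x)"
      using Suc.prems[of "W x" x] by simp
    also have "\<dots> \<le> nA ((W ^^ 2) x) * nA x" unfolding W2 by (rule Ab.Re_le)
    finally show ?thesis .
  qed
  have "(nA (W x)) ^ (2 ^ Suc n) = ((nA (W x))\<^sup>2) ^ (2 ^ n)" by (simp add: power_mult[symmetric] mult.commute)
  also have "\<dots> \<le> (nA ((W ^^ 2) x) * nA x) ^ (2 ^ n)" by (rule power_mono[OF sq]) simp
  also have "\<dots> = (nA ((W ^^ 2) x)) ^ (2 ^ n) * (nA x) ^ (2 ^ n)" by (simp add: power_mult_distrib)
  also have "\<dots> \<le> nA (((W ^^ 2) ^^ (2 ^ n)) x) * (nA x) ^ (2 ^ n - 1) * (nA x) ^ (2 ^ n)"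
    by (rule mult_right_mono[OF IH]) simp
  also have "\<dots> = nA ((W ^^ (2 ^ Suc n)) x) * (nA x) ^ (2 ^ Suc n - 1)"
  proof -
    have "(2::nat) ^ n - 1 + 2 ^ n = 2 ^ Suc n - 1" using one_le_power[of 2 n] by simp
    then show ?thesis unfolding fp by (simp add: mult.assoc power_add[symmetric])
  qed
  finally show ?case .
qed

lemma selfadj_bound:
  assumes sa: "\<And>x y. hs_inner (A (V x)) y = hs_inner (A x) (V y)"
    and K1: "K \<ge> 1" and K: "\<And>x. hs_norm (V x) \<le> K * hs_norm x"
  shows "nA (V x) \<le> K * nA x"
proof -
  obtain C where C0: "C \<ge> 0" and C: "\<And>y. nA y \<le> C * hs_norm y" using nA_le_norm by blast
  have key: "(nA (V x)) ^ (2 ^ n) \<le> C * K ^ (2 ^ n) * hs_norm x * (nA x) ^ (2 ^ n - 1)" for n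
  proof -
    have "(nA (V x)) ^ (2 ^ n) \<le> nA ((V ^^ (2 ^ n)) x) * (nA x) ^ (2 ^ n - 1)" by (rule iter_ineq[OF sa])
    also have "nA ((V ^^ (2 ^ n)) x) \<le> C * K ^ (2 ^ n) * hs_norm x"
      using C[of "(V ^^ (2 ^ n)) x"] funpow_bound[of K V "2 ^ n" x] K K1 C0
      by (smt (verit) mult.assoc mult_left_mono)
    then have "nA ((V ^^ (2 ^ n)) x) * (nA x) ^ (2 ^ n - 1) \<le> C * K ^ (2 ^ n) * hs_norm x * (nA x) ^ (2 ^ n - 1)"
      by (rule mult_right_mono) simp
    finally show ?thesis .
  qed
  show ?thesis
  proof (cases "nA x = 0")
    case True
    have "(nA (V x)) ^ (2 ^ 1) \<le> C * K ^ (2 ^ 1) * hs_norm x * (nA x) ^ (2 ^ 1 - 1)" by (rule key)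
    then have "(nA (V x))\<^sup>2 \<le> 0" using True by simp
    then show ?thesis using True by simp
  next
    case False
    then have nx: "nA x > 0" using Ab.nB_nonneg[of x] by linarith
    show ?thesis
    proof (rule ccontr)
      assume "\<not> ?thesis"
      then have gt: "nA (V x) > K * nA x" by simp
      define q where "q = nA (V x) / (K * nA x)"
      have Kx: "K * nA x > 0" using K1 nx by simp
      have q1: "q > 1" unfolding q_def using gt Kx by simp
      obtain n where n: "C * hs_norm x / nA x < q ^ n" using real_arch_pow[OF q1] by blast
      have "q ^ n \<le> q ^ (2 ^ n)" using q1 by (intro power_increasing) (simp_all add: less_imp_le)
      define N :: nat where "N = 2 ^ n"
      have N1: "N = Suc (N - 1)" unfolding N_def using one_le_power[of 2 n] by simp
      have cne: "K * nA x \<noteq> 0" using Kx by linarith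
      have divmul: "\<And>a c::real. c \<noteq> 0 \<Longrightarrow> a / c * c = a" by simp
      have qe: "q * (K * nA x) = nA (V x)" unfolding q_def by (rule divmul[OF cne])
      obtain M where NM: "N = Suc M" using N1 by blast
      have "(q * (K * nA x)) ^ Suc M \<le> C * K ^ Suc M * hs_norm x * (nA x) ^ M"
        using key[of n] unfolding qe N_def[symmetric] NM by simp
      also have "(q * (K * nA x)) ^ Suc M = (q ^ Suc M * nA x) * (K ^ Suc M * (nA x) ^ M)"
        by (simp only: power_mult_distrib power_Suc mult_ac)
      also have "C * K ^ Suc M * hs_norm x * (nA x) ^ M = (C * hs_norm x) * (K ^ Suc M * (nA x) ^ M)"
        by (simp only: mult_ac)
      finally have ineq: "(q ^ Suc M * nA x) * (K ^ Suc M * (nA x) ^ M) \<le> (C * hs_norm x) * (K ^ Suc M * (nA x) ^ M)" .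
      have "K ^ Suc M * (nA x) ^ M > 0" using K1 nx by simp
      then have "q ^ N * nA x \<le> C * hs_norm x" using ineq unfolding NM by (simp add: mult_le_cancel_right)
      then have "q ^ N \<le> C * hs_norm x / nA x" using nx by (simp add: field_simps)
      then show False using n \<open>q ^ n \<le> q ^ (2 ^ n)\<close> unfolding N_def by simp
    qed
  qed
qed

end


lemma sup_upper:
  fixes g :: "'b \<Rightarrow> real"
  assumes "\<And>z. z \<in> U \<Longrightarrow> g z \<le> C" "z \<in> U"
  shows "g z \<le> Sup (insert 0 (g ` U))"
proof (rule cSup_upper)
  show "g z \<in> insert 0 (g ` U)" using assms(2) by simp
  show "bdd_above (insert 0 (g ` U))" using assms(1) by (intro bdd_aboveI[of _ "max C 0"]) force
qed

lemma sup_nonneg: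
  fixes g :: "'b \<Rightarrow> real"
  assumes "\<And>z. z \<in> U \<Longrightarrow> g z \<le> C"
  shows "0 \<le> Sup (insert 0 (g ` U))"
proof (rule cSup_upper)
  show "0 \<in> insert 0 (g ` U)" by simp
  show "bdd_above (insert 0 (g ` U))" using assms(1) by (intro bdd_aboveI[of _ "max C 0"]) force
qed

lemma sup_least:
  fixes g :: "'b \<Rightarrow> real"
  assumes "0 \<le> M" "\<And>z. z \<in> U \<Longrightarrow> g z \<le> M"
  shows "Sup (insert 0 (g ` U)) \<le> M"
  by (rule cSup_least) (use assms in auto)

lemma sq_le_lin: fixes X a :: real assumes "X\<^sup>2 \<le> a * X" "0 \<le> X" "0 \<le> a" shows "X \<le> a"
proof (cases "X = 0")
  case False
  then have "X > 0" using assms by simp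
  then show ?thesis using assms(1) by (simp add: power2_eq_square)
qed (use assms in simp)

locale BAS = posA +
  fixes S :: "'a \<Rightarrow> 'a"
  assumes SBA: "S \<in> BA A"
begin

lemma bS: "bounded_op S" using SBA by (simp add: BA_def)

definition R where "R = (SOME R. bounded_op R \<and> A \<circ> R = hs_adj S \<circ> A)"

lemma R_prop: "bounded_op R" "A (R x) = hs_adj S (A x)"
proof -
  have "bounded_op R \<and> A \<circ> R = hs_adj S \<circ> A"
  proof -
    have "\<exists>R. bounded_op R \<and> A \<circ> R = hs_adj S \<circ> A" using SBA by (simp add: BA_def)
    then show ?thesis unfolding R_def by (rule someI_ex)
  qed
  then show "bounded_op R" "A (R x) = hs_adj S (A x)" by (auto dest: fun_cong[of _ _ x])
qed

abbreviation Sd where "Sd \<equiv> A_adj A S"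

lemma A_Sd: "A (Sd u) = hs_adj S (A u)"
proof -
  have "Sd u = mp_inv A (A (R u))" by (simp add: A_adj_def R_prop)
  then show ?thesis using mp_inv_ok[of "R u"] R_prop by simp
qed

lemma F1: "hs_inner (A (Sd u)) v = hs_inner (A u) (S v)"
proof -
  have e: "hs_inner (S v) (A u) = hs_inner v (hs_adj S (A u))" by (rule hs_adj_prop(2)[OF bS])
  have "hs_inner (A (Sd u)) v = cnj (hs_inner v (hs_adj S (A u)))"
    unfolding A_Sd by (rule hs_inner_commute)
  also have "\<dots> = cnj (hs_inner (S v) (A u))" using e by simp
  also have "\<dots> = hs_inner (A u) (S v)" using hs_inner_commute[of "S v" "A u"] by simp
  finally show ?thesis .
qed

lemma F2: "hs_inner (A (S x)) y = hs_inner (A x) (R y)"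
proof -
  have "hs_inner (A (S x)) y = hs_inner (S x) (A y)" by (rule A_herm)
  also have "\<dots> = hs_inner x (hs_adj S (A y))" by (rule hs_adj_prop(2)[OF bS])
  also have "\<dots> = hs_inner x (A (R y))" by (simp add: R_prop)
  also have "\<dots> = hs_inner (A x) (R y)" by (simp add: A_herm)
  finally show ?thesis .
qed

lemma V_sa: "hs_inner (A (R (S x))) y = hs_inner (A x) (R (S y))"
proof -
  have "hs_inner (A (R (S x))) y = cnj (hs_inner (A y) (R (S x)))" by (rule Ab.herm)
  also have "hs_inner (A y) (R (S x)) = hs_inner (A (S y)) (S x)" by (simp add: F2)
  also have "cnj (hs_inner (A (S y)) (S x)) = hs_inner (A (S x)) (S y)" by (simp add: Ab.herm[of "S x" "S y"])
  also have "\<dots> = hs_inner (A x) (R (S y))" by (rule F2)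
  finally show ?thesis .
qed

lemma A_bounds: "\<exists>c\<ge>0. (\<forall>x. nA (S x) \<le> c * nA x) \<and> (\<forall>x. nA (Sd x) \<le> c * nA x)"
proof -
  have bV: "bounded_op (R \<circ> S)" by (rule bop_comp[OF R_prop(1) bS])
  obtain K where K0: "K \<ge> 0" and K: "\<And>x. hs_norm ((R \<circ> S) x) \<le> K * hs_norm x" using bounded_opK[OF bV] by blast
  define c where "c = max K 1"
  have c1: "c \<ge> 1" by (simp add: c_def)
  have Kc: "hs_norm ((R \<circ> S) x) \<le> c * hs_norm x" for x
    using K[of x] mult_right_mono[of K c "hs_norm x"] by (simp add: c_def)
  have Vb: "nA (R (S x)) \<le> c * nA x" for x
    using selfadj_bound[of "R \<circ> S" c x] V_sa c1 Kc by simp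
  have Sb: "nA (S x) \<le> sqrt c * nA x" for x
  proof -
    have "(nA (S x))\<^sup>2 = Re (hs_inner (A (S x)) (S x))" by (rule Ab.nB_sq)
    also have "\<dots> = Re (hs_inner (A x) (R (S x)))" by (simp add: F2)
    also have "\<dots> \<le> nA x * nA (R (S x))" by (rule Ab.Re_le)
    also have "\<dots> \<le> nA x * (c * nA x)" by (rule mult_left_mono[OF Vb]) simp
    also have "\<dots> = (sqrt c * nA x)\<^sup>2" using c1 by (simp add: power_mult_distrib power2_eq_square)
    finally show ?thesis by (rule power2_le_imp_le) (use c1 in simp)
  qed
  have Sdb: "nA (Sd x) \<le> sqrt c * nA x" for x
  proof -
    have "(nA (Sd x))\<^sup>2 = Re (hs_inner (A (Sd x)) (Sd x))" by (rule Ab.nB_sq)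
    also have "\<dots> = Re (hs_inner (A x) (S (Sd x)))" by (simp add: F1)
    also have "\<dots> \<le> nA x * nA (S (Sd x))" by (rule Ab.Re_le)
    also have "\<dots> \<le> nA x * (sqrt c * nA (Sd x))" by (rule mult_left_mono[OF Sb]) simp
    finally have "(nA (Sd x))\<^sup>2 \<le> (sqrt c * nA x) * nA (Sd x)" by (simp add: algebra_simps)
    then show ?thesis by (rule sq_le_lin) (use c1 in simp_all)
  qed
  show ?thesis using Sb Sdb c1 by (intro exI[of _ "sqrt c"]) auto
qed

end


context BAS
begin

lemma pointwise:
  assumes z: "nA z = 1"
  shows "(cmod (hs_inner (A (S z)) z))\<^sup>2 + (nA (S z)) ^ 4
     \<le> (cmod (hs_inner (A (Sd (S z) + S z)) z))\<^sup>2
       + cmod (hs_inner (A (Sd (S (S z)))) z)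
       + 1/2 * nA (Sd (S (Sd (S z))) + Sd (S z))"
proof -
  define a where "a = hs_inner (A (S z)) z"
  define b where "b = (nA (S z))\<^sup>2"
  define T where "T = Sd (S z)"
  have b0: "b \<ge> 0" by (simp add: b_def)
  have bRe: "b = Re (hs_inner (A (S z)) (S z))" by (simp add: b_def Ab.nB_sq)
  have Tz: "hs_inner (A T) z = complex_of_real b"
    unfolding T_def F1 bRe by (rule Ab.self_real)
  have s1: "hs_inner (A (T + S z)) z = complex_of_real b + a"
    using Tz by (simp add: Ab.add_left a_def)
  have st1: "(cmod a)\<^sup>2 + b\<^sup>2 \<le> (cmod (complex_of_real b + a))\<^sup>2 + 2 * b * cmod a"
  proof -
    have "(cmod (complex_of_real b + a))\<^sup>2 = (b + Re a)\<^sup>2 + (Im a)\<^sup>2" by (simp add: cmod_power2)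
    moreover have "(cmod a)\<^sup>2 = (Re a)\<^sup>2 + (Im a)\<^sup>2" by (simp add: cmod_power2)
    moreover have "- cmod a \<le> Re a" using abs_Re_le_cmod[of a] by linarith
    then have "- (b * cmod a) \<le> b * Re a" using b0 by (metis minus_mult_right mult_left_mono)
    ultimately show ?thesis by (simp add: power2_sum algebra_simps)
  qed
  have zT: "hs_inner (A z) T = complex_of_real b"
  proof -
    have "hs_inner (A z) T = cnj (hs_inner (A T) z)" by (rule Ab.herm)
    then show ?thesis using Tz by simp
  qed
  have st2: "2 * (b * cmod a) \<le> nA (S z) * nA T + cmod (hs_inner (A (S z)) T)"
  proof -
    have "cmod (hs_inner (A (S z)) z * hs_inner (A z) T) \<le> (nA (S z) * nA T + cmod (hs_inner (A (S z)) T)) / 2"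
      by (rule Ab.buzano[OF z])
    then show ?thesis unfolding zT a_def[symmetric] using b0 by (simp add: norm_mult mult.commute)
  qed
  have st3: "cmod (hs_inner (A (S z)) T) = cmod (hs_inner (A (Sd (S (S z)))) z)"
  proof -
    have "hs_inner (A (S z)) T = cnj (hs_inner (A T) (S z))" by (rule Ab.herm)
    also have "hs_inner (A T) (S z) = hs_inner (A (S z)) (S (S z))" unfolding T_def by (rule F1)
    also have "cnj (hs_inner (A (S z)) (S (S z))) = hs_inner (A (S (S z))) (S z)" by (rule Ab.herm[symmetric])
    also have "\<dots> = hs_inner (A (Sd (S (S z)))) z" by (rule F1[symmetric])
    finally show ?thesis by simp
  qed
  have st4: "2 * (nA (S z) * nA T) \<le> b + (nA T)\<^sup>2"
    unfolding b_def using sum_squares_bound[of "nA (S z)" "nA T"] by (simp add: power2_eq_square)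
  have st5: "b + (nA T)\<^sup>2 \<le> nA (Sd (S T) + T)"
  proof -
    have "(nA T)\<^sup>2 = Re (hs_inner (A T) T)" by (rule Ab.nB_sq)
    also have "hs_inner (A T) T = hs_inner (A (S z)) (S T)" unfolding T_def by (rule F1)
    also have "\<dots> = cnj (hs_inner (A (S T)) (S z))" by (rule Ab.herm)
    also have "hs_inner (A (S T)) (S z) = hs_inner (A (Sd (S T))) z" by (rule F1[symmetric])
    finally have "(nA T)\<^sup>2 = Re (hs_inner (A (Sd (S T))) z)" by simp
    then have "b + (nA T)\<^sup>2 = Re (hs_inner (A (Sd (S T) + T)) z)"
      using Tz by (simp add: Ab.add_left)
    also have "\<dots> \<le> nA (Sd (S T) + T) * nA z" by (rule Ab.Re_le)
    finally show ?thesis using z by simp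
  qed
  have e4: "(nA (S z)) ^ 4 = b\<^sup>2" by (simp add: b_def power_mult[symmetric])
  have e5: "(cmod (hs_inner (A (T + S z)) z))\<^sup>2 = (cmod (complex_of_real b + a))\<^sup>2" using s1 by simp
  have e6: "2 * b * cmod a = 2 * (b * cmod a)" by simp
  show ?thesis
    using e4 e5 e6
    st1 st2 st3 st4 st5 unfolding a_def[symmetric] T_def[symmetric] by linarith
qed

lemma main:
  "(A_dwrad A S)\<^sup>2 \<le>
           (A_numrad A (\<lambda>x. A_adj A S (S x) + S x))\<^sup>2
         + A_numrad A (\<lambda>x. A_adj A S (S (S x)))
         + 1/2 * A_opnorm A (\<lambda>x. A_adj A S (S (A_adj A S (S x))) + A_adj A S (S x))"
proof -
  obtain c where c0: "c \<ge> 0" and cS: "\<And>x. nA (S x) \<le> c * nA x" and cSd: "\<And>x. nA (Sd x) \<le> c * nA x"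
    using A_bounds by blast
  let ?U = "{z. A_norm A z = 1}"
  have U: "z \<in> ?U \<longleftrightarrow> nA z = 1" for z by (simp add: nA_eq)
  have b1: "nA (S z) \<le> c" if "nA z = 1" for z using cS[of z] that by simp
  have b2: "nA (Sd (S z)) \<le> c * c" if "nA z = 1" for z
    using cSd[of "S z"] mult_left_mono[OF b1[OF that] c0] by simp
  have b3: "nA (Sd (S (S z))) \<le> c * (c * c)" if "nA z = 1" for z
    using cSd[of "S (S z)"] cS[of "S z"] mult_left_mono[OF b1[OF that] c0] mult_left_mono[of _ _ c] c0
    by (smt (verit) mult_left_mono)
  have b4: "nA (Sd (S (Sd (S z)))) \<le> c * (c * (c * c))" if "nA z = 1" for z
    using cSd[of "S (Sd (S z))"] cS[of "Sd (S z)"] mult_left_mono[OF b2[OF that] c0] c0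
    by (smt (verit) mult_left_mono)
  define g1 where "g1 = (\<lambda>z. cmod (hs_inner (A (Sd (S z) + S z)) z))"
  define g2 where "g2 = (\<lambda>z. cmod (hs_inner (A (Sd (S (S z)))) z))"
  define g3 where "g3 = (\<lambda>z. A_norm A (Sd (S (Sd (S z))) + Sd (S z)))"
  have g1b: "g1 z \<le> c * c + c" if "z \<in> ?U" for z
  proof -
    have nz: "nA z = 1" using that U by blast
    have "g1 z \<le> nA (Sd (S z) + S z) * nA z" unfolding g1_def by (rule Ab.cs)
    also have "\<dots> \<le> nA (Sd (S z)) + nA (S z)" using nz Ab.nB_triangle by simp
    finally show ?thesis using b1[OF nz] b2[OF nz] by linarith
  qed
  have g2b: "g2 z \<le> c * (c * c)" if "z \<in> ?U" for z
  proof -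
    have nz: "nA z = 1" using that U by blast
    have "g2 z \<le> nA (Sd (S (S z))) * nA z" unfolding g2_def by (rule Ab.cs)
    then show ?thesis using b3[OF nz] nz by simp
  qed
  have g3b: "g3 z \<le> c * (c * (c * c)) + c * c" if "z \<in> ?U" for z
  proof -
    have nz: "nA z = 1" using that U by blast
    have "g3 z \<le> nA (Sd (S (Sd (S z)))) + nA (Sd (S z))" unfolding g3_def nA_eq by (rule Ab.nB_triangle)
    then show ?thesis using b4[OF nz] b2[OF nz] by linarith
  qed
  define w1 where "w1 = A_numrad A (\<lambda>x. A_adj A S (S x) + S x)"
  define w2 where "w2 = A_numrad A (\<lambda>x. A_adj A S (S (S x)))"
  define w3 where "w3 = A_opnorm A (\<lambda>x. A_adj A S (S (A_adj A S (S x))) + A_adj A S (S x))"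
  have w1e: "w1 = Sup (insert 0 (g1 ` ?U))" unfolding w1_def A_numrad_def g1_def by simp
  have w2e: "w2 = Sup (insert 0 (g2 ` ?U))" unfolding w2_def A_numrad_def g2_def by simp
  have w3e: "w3 = Sup (insert 0 (g3 ` ?U))" unfolding w3_def A_opnorm_def g3_def by simp
  have w10: "0 \<le> w1" unfolding w1e by (rule sup_nonneg[OF g1b])
  have w20: "0 \<le> w2" unfolding w2e by (rule sup_nonneg[OF g2b])
  have w30: "0 \<le> w3" unfolding w3e by (rule sup_nonneg[OF g3b])
  define RHS where "RHS = w1\<^sup>2 + w2 + 1/2 * w3"
  have R0: "0 \<le> RHS" unfolding RHS_def using w10 w20 w30 by simp
  have pt: "sqrt ((cmod (hs_inner (A (S z)) z))\<^sup>2 + (A_norm A (S z)) ^ 4) \<le> sqrt RHS" if "z \<in> ?U" for z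
  proof -
    have nz: "nA z = 1" using that U by blast
    have "g1 z \<le> w1" unfolding w1e by (rule sup_upper[OF g1b that])
    then have "(g1 z)\<^sup>2 \<le> w1\<^sup>2" by (rule power_mono) (simp add: g1_def)
    moreover have "g2 z \<le> w2" unfolding w2e by (rule sup_upper[OF g2b that])
    moreover have "g3 z \<le> w3" unfolding w3e by (rule sup_upper[OF g3b that])
    ultimately have "(cmod (hs_inner (A (S z)) z))\<^sup>2 + (nA (S z)) ^ 4 \<le> RHS"
      using pointwise[OF nz] unfolding RHS_def g1_def g2_def g3_def nA_eq by linarith
    then show ?thesis unfolding nA_eq by simp
  qed
  have "A_dwrad A S \<le> sqrt RHS" unfolding A_dwrad_def
    by (rule sup_least) (use R0 pt in auto)
  moreover have "0 \<le> A_dwrad A S" unfolding A_dwrad_def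
    by (rule sup_nonneg[of _ _ "sqrt RHS"]) (use pt in auto)
  ultimately have "(A_dwrad A S)\<^sup>2 \<le> (sqrt RHS)\<^sup>2" by (rule power_mono)
  then show ?thesis using R0 unfolding RHS_def w1_def w2_def w3_def by simp
qed

end

theorem corollary2p3:
  fixes A S :: "'a::hs_hilbert \<Rightarrow> 'a"
  assumes "positive_op A"
    and "S \<in> BA A"
  shows "(A_dwrad A S)\<^sup>2 \<le>
           (A_numrad A (\<lambda>x. A_adj A S (S x) + S x))\<^sup>2
         + A_numrad A (\<lambda>x. A_adj A S (S (S x)))
         + 1/2 * A_opnorm A (\<lambda>x. A_adj A S (S (A_adj A S (S x))) + A_adj A S (S x))"
proof -
  interpret BAS A S by unfold_locales (use assms in auto)
  show ?thesis by (rule main)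
qed

end
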